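(* Let $\Pi$ be the topological prismatoid \#1963 of Criado and Santos: a polyhedral $4$-sphere on the $14$ vertices $0,1,2,3,4,5,6,a,b,c,d,e,f,g$ whose simplicial facets are exactly the following $4$-simplices (each string lists the five vertices of a facet): 015cf, 0245f, 0256g, 025ce, 025cg, 06bcf, 125cf, 25bce, 0123d, 0126d, 0134e, 013ae, 013af, 013bd, 013bg, 013cf, 013cg, 0145f, 014ae, 014af, 0156g, 015cg, 016bd, 016bg, 0234e, 023bd, 023be, 024ae, 024af, 025ae, 025af, 026bd, 026be, 026ce, 026cg, 03abe, 03abf, 03bcf, 03bcg, 05ace, 05acf, 06abe, 06abf, 06ace, 06acf, 06bcg, 1234e, 123bd, 123be, 1245f, 124ac, 124af, 124bd, 124be, 124cd, 1256g, 125cg, 126cd, 126cg, 12acf, 13abe, 13abg, 13acf, 13acg, 14abe, 14abg, 14acg, 14bcd, 14bcg, 16bcd, 16bcg, 24abd, 24abe, 24acd, 25abd, 25abe, 25acd, 25acf, 25bcd, 26bcd, 26bce, 3abfg, 3acfg, 3bcfg, 4abcd, 4abcg, 5abde, 5acde, 5bcde, 6abef, 6acef, 6bcef, and which in addition has exactly two non-simplicial facets, its two bases, with vertex sets $\{0,1,\dots,6\}$ and $\{a,b,\dots,g\}$. Then $\Pi$ is not realizable: there is no convex $5$-polytope whose boundary complex is combinatorially isomorphic to $\Pi$.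
   Context: A topological prismatoid (Criado–Santos) is a combinatorial abstraction of a geometric prismatoid, i.e. of a polytope all of whose vertices lie in two parallel facets (the bases); all other facets are here simplices. *)

theory Defs
  imports "HOL-Analysis.Analysis"
begin

datatype lab = V0 | V1 | V2 | V3 | V4 | V5 | V6 | A | B | C | D | E | F | G

definition lab_of :: "char \<Rightarrow> lab" where
  "lab_of c = (if c = CHR ''0'' then V0 else if c = CHR ''1'' then V1 else if c = CHR ''2'' then V2 else if c = CHR ''3'' then V3 else if c = CHR ''4'' then V4 else if c = CHR ''5'' then V5 else if c = CHR ''6'' then V6 else if c = CHR ''a'' then A else if c = CHR ''b'' then B else if c = CHR ''c'' then C else if c = CHR ''d'' then D else if c = CHR ''e'' then E else if c = CHR ''f'' then F else G)"

definition fac :: "string \<Rightarrow> lab set" where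
  "fac s = lab_of ` set s"

definition simplex_facets_1963 :: "string list" where
  "simplex_facets_1963 =
    [''015cf'',
     ''0245f'',
     ''0256g'',
     ''025ce'',
     ''025cg'',
     ''06bcf'',
     ''125cf'',
     ''25bce'',
     ''0123d'',
     ''0126d'',
     ''0134e'',
     ''013ae'',
     ''013af'',
     ''013bd'',
     ''013bg'',
     ''013cf'',
     ''013cg'',
     ''0145f'',
     ''014ae'',
     ''014af'',
     ''0156g'',
     ''015cg'',
     ''016bd'',
     ''016bg'',
     ''0234e'',
     ''023bd'',
     ''023be'',
     ''024ae'',
     ''024af'',
     ''025ae'',
     ''025af'',
     ''026bd'',
     ''026be'',
     ''026ce'',
     ''026cg'',
     ''03abe'',
     ''03abf'',
     ''03bcf'',
     ''03bcg'',
     ''05ace'',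
     ''05acf'',
     ''06abe'',
     ''06abf'',
     ''06ace'',
     ''06acf'',
     ''06bcg'',
     ''1234e'',
     ''123bd'',
     ''123be'',
     ''1245f'',
     ''124ac'',
     ''124af'',
     ''124bd'',
     ''124be'',
     ''124cd'',
     ''1256g'',
     ''125cg'',
     ''126cd'',
     ''126cg'',
     ''12acf'',
     ''13abe'',
     ''13abg'',
     ''13acf'',
     ''13acg'',
     ''14abe'',
     ''14abg'',
     ''14acg'',
     ''14bcd'',
     ''14bcg'',
     ''16bcd'',
     ''16bcg'',
     ''24abd'',
     ''24abe'',
     ''24acd'',
     ''25abd'',
     ''25abe'',
     ''25acd'',
     ''25acf'',
     ''25bcd'',
     ''26bcd'',
     ''26bce'',
     ''3abfg'',
     ''3acfg'',
     ''3bcfg'',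
     ''4abcd'',
     ''4abcg'',
     ''5abde'',
     ''5acde'',
     ''5bcde'',
     ''6abef'',
     ''6acef'',
     ''6bcef'']"

definition Pi_facets :: "lab set set" where
  "Pi_facets = fac ` set simplex_facets_1963
      \<union> {{V0, V1, V2, V3, V4, V5, V6}, {A, B, C, D, E, F, G}}"

text \<open>A polytope is realization of a combinatorial sphere given by facet vertex sets
  if there is a bijection between the labels and the vertices of the polytope mapping
  the facets of the polytope exactly onto the given facets.  (The face lattice of a
  polytope is determined by its vertex-facet incidences.)\<close>
definition realizes :: "('a::euclidean_space) set \<Rightarrow> lab set set \<Rightarrow> bool" where
  "realizes P \<Phi> \<longleftrightarrow>
     (\<exists>v. bij_betw v (UNIV :: lab set) {x. x extreme_point_of P} \<and>
          {{i. v i \<in> Fc} | Fc. Fc facet_of P} = \<Phi>)"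

end

theory Submission imports Defs begin

lemma negmul: "(c::real) < 0 \<Longrightarrow> (x*c > 0 \<longleftrightarrow> x < 0) \<and> (x*c < 0 \<longleftrightarrow> x > 0) \<and> (x*c = 0 \<longleftrightarrow> x = 0)"
  by (auto simp: zero_less_mult_iff mult_less_0_iff)

lemma dep:
  fixes v :: "lab \<Rightarrow> real^5"
  assumes "inj v" "I \<subseteq> U" "finite U" "card I = 7"
  shows "\<exists>l. (\<forall>i. i \<notin> I \<longrightarrow> l i = 0) \<and> sum l U = 0 \<and> (\<Sum>i\<in>U. l i *\<^sub>R v i) = 0 \<and> (\<exists>i\<in>I. l i \<noteq> 0)"
proof -
  have fI: "finite I" using assms finite_subset by blast
  have ci: "card (v ` I) = 7" using assms card_image inj_on_subset by (metis subset_UNIV)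
  have "affine_dependent (v ` I)"
    by (rule affine_dependent_biggerset) (use fI ci in auto)
  then obtain W where W: "sum W (v ` I) = 0" "\<exists>x\<in>v ` I. W x \<noteq> 0" "(\<Sum>x\<in>v ` I. W x *\<^sub>R x) = 0"
    using affine_dependent_explicit_finite[of "v ` I"] fI by auto
  define l where "l i = (if i \<in> I then W (v i) else 0)" for i
  have ii: "inj_on v I" using assms(1) inj_on_subset by blast
  have "sum l U = sum l I" unfolding l_def using assms(2,3) by (intro sum.mono_neutral_right) auto
  also have "\<dots> = sum W (v ` I)" using sum.reindex[OF ii, of W] by (simp add: l_def)
  finally have s1: "sum l U = 0" using W by simp
  have "(\<Sum>i\<in>U. l i *\<^sub>R v i) = (\<Sum>i\<in>I. l i *\<^sub>R v i)" unfolding l_def using assms(2,3) by (intro sum.mono_neutral_right) auto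
  also have "\<dots> = (\<Sum>x\<in>v ` I. W x *\<^sub>R x)" using sum.reindex[OF ii, of "\<lambda>x. W x *\<^sub>R x"] by (simp add: l_def)
  finally have s2: "(\<Sum>i\<in>U. l i *\<^sub>R v i) = 0" using W by simp
  have "\<exists>i\<in>I. l i \<noteq> 0" using W(2) by (auto simp: l_def)
  then show ?thesis using s1 s2 by (auto simp: l_def intro!: exI[of _ l])
qed

lemma facfun:
  fixes P :: "(real^5) set" and v :: "lab \<Rightarrow> real^5"
  assumes P: "polytope P" and vP: "\<And>i. v i \<in> P"
    and eq: "{{i. v i \<in> Fc} | Fc. Fc facet_of P} = Pi_facets" and S: "S \<in> Pi_facets"
    and U: "finite U"
  shows "\<exists>f. (\<forall>i. i \<in> S \<longrightarrow> f i = 0) \<and> (\<forall>i. i \<notin> S \<longrightarrow> f i < 0) \<and>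
     (\<forall>l. sum l U = 0 \<longrightarrow> (\<Sum>i\<in>U. l i *\<^sub>R v i) = 0 \<longrightarrow> (\<Sum>i\<in>U. l i * f i) = 0)"
proof -
  obtain Fc where Fc: "Fc facet_of P" "S = {i. v i \<in> Fc}" using S eq by blast
  obtain a b where ab: "P \<subseteq> {x. a \<bullet> x \<le> b}" "Fc = P \<inter> {x. a \<bullet> x = b}"
    using facet_of_polyhedron[OF polytope_imp_polyhedron[OF P] Fc(1)] by metis
  define f where "f i = a \<bullet> v i - b" for i
  have 1: "\<forall>i. i \<in> S \<longrightarrow> f i = 0" using Fc ab by (auto simp: f_def)
  have 2: "\<forall>i. i \<notin> S \<longrightarrow> f i < 0" using Fc ab vP by (force simp: f_def)
  have 3: "(\<Sum>i\<in>U. l i * f i) = 0" if "sum l U = 0" "(\<Sum>i\<in>U. l i *\<^sub>R v i) = 0" for l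
  proof -
    have "(\<Sum>i\<in>U. l i * f i) = a \<bullet> (\<Sum>i\<in>U. l i *\<^sub>R v i) - b * sum l U"
      by (simp add: f_def inner_sum_right algebra_simps sum_subtractf sum_distrib_left)
    then show ?thesis using that by simp
  qed
  show ?thesis using 1 2 3 by blast
qed

lemma sgn1:
  fixes x1 a1 :: real
  assumes e: "x1*a1 = 0" and n: "a1 < 0"
  shows "(x1 \<ge> 0 \<longrightarrow> x1 = 0) \<and> (x1 \<le> 0 \<longrightarrow> x1 = 0)"
proof (rule conjI; rule impI)
  assume h: "x1 \<ge> 0"
  have "x1*a1 \<le> 0" using h n by (simp add: mult_nonneg_nonpos)
  then have "x1*a1 = 0" using e by linarith
  then show "x1 = 0" using n by auto
next
  assume h: "x1 \<le> 0"
  have "x1*a1 \<ge> 0" using h n by (simp add: mult_nonpos_nonpos)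
  then have "x1*a1 = 0" using e by linarith
  then show "x1 = 0" using n by auto
qed

lemma sgn2:
  fixes x1 x2 a1 a2 :: real
  assumes e: "x1*a1 + x2*a2 = 0" and n: "a1 < 0" "a2 < 0"
  shows "(x1 \<ge> 0 \<and> x2 \<ge> 0 \<longrightarrow> x1 = 0 \<and> x2 = 0) \<and> (x1 \<le> 0 \<and> x2 \<le> 0 \<longrightarrow> x1 = 0 \<and> x2 = 0)"
proof (rule conjI; rule impI)
  assume h: "x1 \<ge> 0 \<and> x2 \<ge> 0"
  have "x1*a1 \<le> 0 \<and> x2*a2 \<le> 0" using h n by (simp add: mult_nonneg_nonpos)
  then have "x1*a1 = 0 \<and> x2*a2 = 0" using e by linarith
  then show "x1 = 0 \<and> x2 = 0" using n by auto
next
  assume h: "x1 \<le> 0 \<and> x2 \<le> 0"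
  have "x1*a1 \<ge> 0 \<and> x2*a2 \<ge> 0" using h n by (simp add: mult_nonpos_nonpos)
  then have "x1*a1 = 0 \<and> x2*a2 = 0" using e by linarith
  then show "x1 = 0 \<and> x2 = 0" using n by auto
qed

lemma sgn3:
  fixes x1 x2 x3 a1 a2 a3 :: real
  assumes e: "x1*a1 + x2*a2 + x3*a3 = 0" and n: "a1 < 0" "a2 < 0" "a3 < 0"
  shows "(x1 \<ge> 0 \<and> x2 \<ge> 0 \<and> x3 \<ge> 0 \<longrightarrow> x1 = 0 \<and> x2 = 0 \<and> x3 = 0) \<and> (x1 \<le> 0 \<and> x2 \<le> 0 \<and> x3 \<le> 0 \<longrightarrow> x1 = 0 \<and> x2 = 0 \<and> x3 = 0)"
proof (rule conjI; rule impI)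
  assume h: "x1 \<ge> 0 \<and> x2 \<ge> 0 \<and> x3 \<ge> 0"
  have "x1*a1 \<le> 0 \<and> x2*a2 \<le> 0 \<and> x3*a3 \<le> 0" using h n by (simp add: mult_nonneg_nonpos)
  then have "x1*a1 = 0 \<and> x2*a2 = 0 \<and> x3*a3 = 0" using e by linarith
  then show "x1 = 0 \<and> x2 = 0 \<and> x3 = 0" using n by auto
next
  assume h: "x1 \<le> 0 \<and> x2 \<le> 0 \<and> x3 \<le> 0"
  have "x1*a1 \<ge> 0 \<and> x2*a2 \<ge> 0 \<and> x3*a3 \<ge> 0" using h n by (simp add: mult_nonpos_nonpos)
  then have "x1*a1 = 0 \<and> x2*a2 = 0 \<and> x3*a3 = 0" using e by linarith
  then show "x1 = 0 \<and> x2 = 0 \<and> x3 = 0" using n by auto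
qed

lemma sgn4:
  fixes x1 x2 x3 x4 a1 a2 a3 a4 :: real
  assumes e: "x1*a1 + x2*a2 + x3*a3 + x4*a4 = 0" and n: "a1 < 0" "a2 < 0" "a3 < 0" "a4 < 0"
  shows "(x1 \<ge> 0 \<and> x2 \<ge> 0 \<and> x3 \<ge> 0 \<and> x4 \<ge> 0 \<longrightarrow> x1 = 0 \<and> x2 = 0 \<and> x3 = 0 \<and> x4 = 0) \<and> (x1 \<le> 0 \<and> x2 \<le> 0 \<and> x3 \<le> 0 \<and> x4 \<le> 0 \<longrightarrow> x1 = 0 \<and> x2 = 0 \<and> x3 = 0 \<and> x4 = 0)"
proof (rule conjI; rule impI)
  assume h: "x1 \<ge> 0 \<and> x2 \<ge> 0 \<and> x3 \<ge> 0 \<and> x4 \<ge> 0"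
  have "x1*a1 \<le> 0 \<and> x2*a2 \<le> 0 \<and> x3*a3 \<le> 0 \<and> x4*a4 \<le> 0" using h n by (simp add: mult_nonneg_nonpos)
  then have "x1*a1 = 0 \<and> x2*a2 = 0 \<and> x3*a3 = 0 \<and> x4*a4 = 0" using e by linarith
  then show "x1 = 0 \<and> x2 = 0 \<and> x3 = 0 \<and> x4 = 0" using n by auto
next
  assume h: "x1 \<le> 0 \<and> x2 \<le> 0 \<and> x3 \<le> 0 \<and> x4 \<le> 0"
  have "x1*a1 \<ge> 0 \<and> x2*a2 \<ge> 0 \<and> x3*a3 \<ge> 0 \<and> x4*a4 \<ge> 0" using h n by (simp add: mult_nonpos_nonpos)
  then have "x1*a1 = 0 \<and> x2*a2 = 0 \<and> x3*a3 = 0 \<and> x4*a4 = 0" using e by linarith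
  then show "x1 = 0 \<and> x2 = 0 \<and> x3 = 0 \<and> x4 = 0" using n by auto
qed

lemma sgn5:
  fixes x1 x2 x3 x4 x5 a1 a2 a3 a4 a5 :: real
  assumes e: "x1*a1 + x2*a2 + x3*a3 + x4*a4 + x5*a5 = 0" and n: "a1 < 0" "a2 < 0" "a3 < 0" "a4 < 0" "a5 < 0"
  shows "(x1 \<ge> 0 \<and> x2 \<ge> 0 \<and> x3 \<ge> 0 \<and> x4 \<ge> 0 \<and> x5 \<ge> 0 \<longrightarrow> x1 = 0 \<and> x2 = 0 \<and> x3 = 0 \<and> x4 = 0 \<and> x5 = 0) \<and> (x1 \<le> 0 \<and> x2 \<le> 0 \<and> x3 \<le> 0 \<and> x4 \<le> 0 \<and> x5 \<le> 0 \<longrightarrow> x1 = 0 \<and> x2 = 0 \<and> x3 = 0 \<and> x4 = 0 \<and> x5 = 0)"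
proof (rule conjI; rule impI)
  assume h: "x1 \<ge> 0 \<and> x2 \<ge> 0 \<and> x3 \<ge> 0 \<and> x4 \<ge> 0 \<and> x5 \<ge> 0"
  have "x1*a1 \<le> 0 \<and> x2*a2 \<le> 0 \<and> x3*a3 \<le> 0 \<and> x4*a4 \<le> 0 \<and> x5*a5 \<le> 0" using h n by (simp add: mult_nonneg_nonpos)
  then have "x1*a1 = 0 \<and> x2*a2 = 0 \<and> x3*a3 = 0 \<and> x4*a4 = 0 \<and> x5*a5 = 0" using e by linarith
  then show "x1 = 0 \<and> x2 = 0 \<and> x3 = 0 \<and> x4 = 0 \<and> x5 = 0" using n by auto
next
  assume h: "x1 \<le> 0 \<and> x2 \<le> 0 \<and> x3 \<le> 0 \<and> x4 \<le> 0 \<and> x5 \<le> 0"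
  have "x1*a1 \<ge> 0 \<and> x2*a2 \<ge> 0 \<and> x3*a3 \<ge> 0 \<and> x4*a4 \<ge> 0 \<and> x5*a5 \<ge> 0" using h n by (simp add: mult_nonpos_nonpos)
  then have "x1*a1 = 0 \<and> x2*a2 = 0 \<and> x3*a3 = 0 \<and> x4*a4 = 0 \<and> x5*a5 = 0" using e by linarith
  then show "x1 = 0 \<and> x2 = 0 \<and> x3 = 0 \<and> x4 = 0 \<and> x5 = 0" using n by auto
qed

lemma sgn6:
  fixes x1 x2 x3 x4 x5 x6 a1 a2 a3 a4 a5 a6 :: real
  assumes e: "x1*a1 + x2*a2 + x3*a3 + x4*a4 + x5*a5 + x6*a6 = 0" and n: "a1 < 0" "a2 < 0" "a3 < 0" "a4 < 0" "a5 < 0" "a6 < 0"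
  shows "(x1 \<ge> 0 \<and> x2 \<ge> 0 \<and> x3 \<ge> 0 \<and> x4 \<ge> 0 \<and> x5 \<ge> 0 \<and> x6 \<ge> 0 \<longrightarrow> x1 = 0 \<and> x2 = 0 \<and> x3 = 0 \<and> x4 = 0 \<and> x5 = 0 \<and> x6 = 0) \<and> (x1 \<le> 0 \<and> x2 \<le> 0 \<and> x3 \<le> 0 \<and> x4 \<le> 0 \<and> x5 \<le> 0 \<and> x6 \<le> 0 \<longrightarrow> x1 = 0 \<and> x2 = 0 \<and> x3 = 0 \<and> x4 = 0 \<and> x5 = 0 \<and> x6 = 0)"
proof (rule conjI; rule impI)
  assume h: "x1 \<ge> 0 \<and> x2 \<ge> 0 \<and> x3 \<ge> 0 \<and> x4 \<ge> 0 \<and> x5 \<ge> 0 \<and> x6 \<ge> 0"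
  have "x1*a1 \<le> 0 \<and> x2*a2 \<le> 0 \<and> x3*a3 \<le> 0 \<and> x4*a4 \<le> 0 \<and> x5*a5 \<le> 0 \<and> x6*a6 \<le> 0" using h n by (simp add: mult_nonneg_nonpos)
  then have "x1*a1 = 0 \<and> x2*a2 = 0 \<and> x3*a3 = 0 \<and> x4*a4 = 0 \<and> x5*a5 = 0 \<and> x6*a6 = 0" using e by linarith
  then show "x1 = 0 \<and> x2 = 0 \<and> x3 = 0 \<and> x4 = 0 \<and> x5 = 0 \<and> x6 = 0" using n by auto
next
  assume h: "x1 \<le> 0 \<and> x2 \<le> 0 \<and> x3 \<le> 0 \<and> x4 \<le> 0 \<and> x5 \<le> 0 \<and> x6 \<le> 0"
  have "x1*a1 \<ge> 0 \<and> x2*a2 \<ge> 0 \<and> x3*a3 \<ge> 0 \<and> x4*a4 \<ge> 0 \<and> x5*a5 \<ge> 0 \<and> x6*a6 \<ge> 0" using h n by (simp add: mult_nonpos_nonpos)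
  then have "x1*a1 = 0 \<and> x2*a2 = 0 \<and> x3*a3 = 0 \<and> x4*a4 = 0 \<and> x5*a5 = 0 \<and> x6*a6 = 0" using e by linarith
  then show "x1 = 0 \<and> x2 = 0 \<and> x3 = 0 \<and> x4 = 0 \<and> x5 = 0 \<and> x6 = 0" using n by auto
qed

lemma mem_0126d: "{V0,V1,V2,V6,D} \<in> Pi_facets"
proof -
  have "fac ''0126d'' = {V0,V1,V2,V6,D}" by (auto simp: fac_def lab_of_def)
  moreover have "fac ''0126d'' \<in> Pi_facets" unfolding Pi_facets_def
    by (rule UnI1, rule imageI, simp add: simplex_facets_1963_def)
  ultimately show ?thesis by simp
qed

lemma mem_1234e: "{V1,V2,V3,V4,E} \<in> Pi_facets"
proof -
  have "fac ''1234e'' = {V1,V2,V3,V4,E}" by (auto simp: fac_def lab_of_def)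
  moreover have "fac ''1234e'' \<in> Pi_facets" unfolding Pi_facets_def
    by (rule UnI1, rule imageI, simp add: simplex_facets_1963_def)
  ultimately show ?thesis by simp
qed

lemma mem_1245f: "{V1,V2,V4,V5,F} \<in> Pi_facets"
proof -
  have "fac ''1245f'' = {V1,V2,V4,V5,F}" by (auto simp: fac_def lab_of_def)
  moreover have "fac ''1245f'' \<in> Pi_facets" unfolding Pi_facets_def
    by (rule UnI1, rule imageI, simp add: simplex_facets_1963_def)
  ultimately show ?thesis by simp
qed

lemma mem_26bce: "{V2,V6,B,C,E} \<in> Pi_facets"
proof -
  have "fac ''26bce'' = {V2,V6,B,C,E}" by (auto simp: fac_def lab_of_def)
  moreover have "fac ''26bce'' \<in> Pi_facets" unfolding Pi_facets_def
    by (rule UnI1, rule imageI, simp add: simplex_facets_1963_def)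
  ultimately show ?thesis by simp
qed

lemma mem_014ae: "{V0,V1,V4,A,E} \<in> Pi_facets"
proof -
  have "fac ''014ae'' = {V0,V1,V4,A,E}" by (auto simp: fac_def lab_of_def)
  moreover have "fac ''014ae'' \<in> Pi_facets" unfolding Pi_facets_def
    by (rule UnI1, rule imageI, simp add: simplex_facets_1963_def)
  ultimately show ?thesis by simp
qed

lemma mem_124af: "{V1,V2,V4,A,F} \<in> Pi_facets"
proof -
  have "fac ''124af'' = {V1,V2,V4,A,F}" by (auto simp: fac_def lab_of_def)
  moreover have "fac ''124af'' \<in> Pi_facets" unfolding Pi_facets_def
    by (rule UnI1, rule imageI, simp add: simplex_facets_1963_def)
  ultimately show ?thesis by simp
qed

lemma mem_124be: "{V1,V2,V4,B,E} \<in> Pi_facets"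
proof -
  have "fac ''124be'' = {V1,V2,V4,B,E}" by (auto simp: fac_def lab_of_def)
  moreover have "fac ''124be'' \<in> Pi_facets" unfolding Pi_facets_def
    by (rule UnI1, rule imageI, simp add: simplex_facets_1963_def)
  ultimately show ?thesis by simp
qed

lemma mem_13abe: "{V1,V3,A,B,E} \<in> Pi_facets"
proof -
  have "fac ''13abe'' = {V1,V3,A,B,E}" by (auto simp: fac_def lab_of_def)
  moreover have "fac ''13abe'' \<in> Pi_facets" unfolding Pi_facets_def
    by (rule UnI1, rule imageI, simp add: simplex_facets_1963_def)
  ultimately show ?thesis by simp
qed

lemma mem_024ae: "{V0,V2,V4,A,E} \<in> Pi_facets"
proof -
  have "fac ''024ae'' = {V0,V2,V4,A,E}" by (auto simp: fac_def lab_of_def)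
  moreover have "fac ''024ae'' \<in> Pi_facets" unfolding Pi_facets_def
    by (rule UnI1, rule imageI, simp add: simplex_facets_1963_def)
  ultimately show ?thesis by simp
qed

lemma mem_25abe: "{V2,V5,A,B,E} \<in> Pi_facets"
proof -
  have "fac ''25abe'' = {V2,V5,A,B,E}" by (auto simp: fac_def lab_of_def)
  moreover have "fac ''25abe'' \<in> Pi_facets" unfolding Pi_facets_def
    by (rule UnI1, rule imageI, simp add: simplex_facets_1963_def)
  ultimately show ?thesis by simp
qed

lemma mem_Q1: "{V0,V1,V2,V3,V4,V5,V6} \<in> Pi_facets" by (simp add: Pi_facets_def)
lemma mem_Q2: "{A,B,C,D,E,F,G} \<in> Pi_facets" by (simp add: Pi_facets_def)

theorem mainTheorem4:
  shows "\<not> (\<exists>P :: (real^5) set. polytope P \<and> aff_dim P = 5 \<and> realizes P Pi_facets)"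
proof
  assume "\<exists>P :: (real^5) set. polytope P \<and> aff_dim P = 5 \<and> realizes P Pi_facets"
  then obtain P :: "(real^5) set" where P: "polytope P" and R: "realizes P Pi_facets" by blast
  then obtain v where bij: "bij_betw v (UNIV :: lab set) {x. x extreme_point_of P}"
    and eq: "{{i. v i \<in> Fc} | Fc. Fc facet_of P} = Pi_facets" unfolding realizes_def by blast
  have inj: "inj v" using bij by (simp add: bij_betw_def)
  have vP: "\<And>i. v i \<in> P" using bij by (auto simp: bij_betw_def extreme_point_of_def)
  define U where "U = {V0,V1,V2,V3,V4,V5,A,E}"
  have fU: "finite U" by (simp add: U_def)
  note ff = facfun[OF P vP eq _ fU]

  obtain f_0126d where f_0126d: "\<forall>i. i \<in> {V0,V1,V2,V6,D} \<longrightarrow> f_0126d i = 0" "\<forall>i. i \<notin> {V0,V1,V2,V6,D} \<longrightarrow> f_0126d i < 0"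
     "\<forall>l. sum l U = 0 \<longrightarrow> (\<Sum>i\<in>U. l i *\<^sub>R v i) = 0 \<longrightarrow> (\<Sum>i\<in>U. l i * f_0126d i) = 0"
    using ff[OF mem_0126d] by blast
  have z_0126d_V0: "f_0126d V0 = 0" using f_0126d(1) by simp
  have z_0126d_V1: "f_0126d V1 = 0" using f_0126d(1) by simp
  have z_0126d_V2: "f_0126d V2 = 0" using f_0126d(1) by simp
  have n_0126d_V3: "f_0126d V3 < 0" using f_0126d(2) by simp
  have n_0126d_V4: "f_0126d V4 < 0" using f_0126d(2) by simp
  have n_0126d_V5: "f_0126d V5 < 0" using f_0126d(2) by simp
  have n_0126d_A: "f_0126d A < 0" using f_0126d(2) by simp
  have n_0126d_E: "f_0126d E < 0" using f_0126d(2) by simp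
  obtain f_014ae where f_014ae: "\<forall>i. i \<in> {V0,V1,V4,A,E} \<longrightarrow> f_014ae i = 0" "\<forall>i. i \<notin> {V0,V1,V4,A,E} \<longrightarrow> f_014ae i < 0"
     "\<forall>l. sum l U = 0 \<longrightarrow> (\<Sum>i\<in>U. l i *\<^sub>R v i) = 0 \<longrightarrow> (\<Sum>i\<in>U. l i * f_014ae i) = 0"
    using ff[OF mem_014ae] by blast
  have z_014ae_V0: "f_014ae V0 = 0" using f_014ae(1) by simp
  have z_014ae_V1: "f_014ae V1 = 0" using f_014ae(1) by simp
  have n_014ae_V2: "f_014ae V2 < 0" using f_014ae(2) by simp
  have n_014ae_V3: "f_014ae V3 < 0" using f_014ae(2) by simp
  have z_014ae_V4: "f_014ae V4 = 0" using f_014ae(1) by simp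
  have n_014ae_V5: "f_014ae V5 < 0" using f_014ae(2) by simp
  have z_014ae_A: "f_014ae A = 0" using f_014ae(1) by simp
  have z_014ae_E: "f_014ae E = 0" using f_014ae(1) by simp
  obtain f_024ae where f_024ae: "\<forall>i. i \<in> {V0,V2,V4,A,E} \<longrightarrow> f_024ae i = 0" "\<forall>i. i \<notin> {V0,V2,V4,A,E} \<longrightarrow> f_024ae i < 0"
     "\<forall>l. sum l U = 0 \<longrightarrow> (\<Sum>i\<in>U. l i *\<^sub>R v i) = 0 \<longrightarrow> (\<Sum>i\<in>U. l i * f_024ae i) = 0"
    using ff[OF mem_024ae] by blast
  have z_024ae_V0: "f_024ae V0 = 0" using f_024ae(1) by simp
  have n_024ae_V1: "f_024ae V1 < 0" using f_024ae(2) by simp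
  have z_024ae_V2: "f_024ae V2 = 0" using f_024ae(1) by simp
  have n_024ae_V3: "f_024ae V3 < 0" using f_024ae(2) by simp
  have z_024ae_V4: "f_024ae V4 = 0" using f_024ae(1) by simp
  have n_024ae_V5: "f_024ae V5 < 0" using f_024ae(2) by simp
  have z_024ae_A: "f_024ae A = 0" using f_024ae(1) by simp
  have z_024ae_E: "f_024ae E = 0" using f_024ae(1) by simp
  obtain f_1234e where f_1234e: "\<forall>i. i \<in> {V1,V2,V3,V4,E} \<longrightarrow> f_1234e i = 0" "\<forall>i. i \<notin> {V1,V2,V3,V4,E} \<longrightarrow> f_1234e i < 0"
     "\<forall>l. sum l U = 0 \<longrightarrow> (\<Sum>i\<in>U. l i *\<^sub>R v i) = 0 \<longrightarrow> (\<Sum>i\<in>U. l i * f_1234e i) = 0"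
    using ff[OF mem_1234e] by blast
  have n_1234e_V0: "f_1234e V0 < 0" using f_1234e(2) by simp
  have z_1234e_V1: "f_1234e V1 = 0" using f_1234e(1) by simp
  have z_1234e_V2: "f_1234e V2 = 0" using f_1234e(1) by simp
  have z_1234e_V3: "f_1234e V3 = 0" using f_1234e(1) by simp
  have z_1234e_V4: "f_1234e V4 = 0" using f_1234e(1) by simp
  have n_1234e_V5: "f_1234e V5 < 0" using f_1234e(2) by simp
  have n_1234e_A: "f_1234e A < 0" using f_1234e(2) by simp
  have z_1234e_E: "f_1234e E = 0" using f_1234e(1) by simp
  obtain f_1245f where f_1245f: "\<forall>i. i \<in> {V1,V2,V4,V5,F} \<longrightarrow> f_1245f i = 0" "\<forall>i. i \<notin> {V1,V2,V4,V5,F} \<longrightarrow> f_1245f i < 0"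
     "\<forall>l. sum l U = 0 \<longrightarrow> (\<Sum>i\<in>U. l i *\<^sub>R v i) = 0 \<longrightarrow> (\<Sum>i\<in>U. l i * f_1245f i) = 0"
    using ff[OF mem_1245f] by blast
  have n_1245f_V0: "f_1245f V0 < 0" using f_1245f(2) by simp
  have z_1245f_V1: "f_1245f V1 = 0" using f_1245f(1) by simp
  have z_1245f_V2: "f_1245f V2 = 0" using f_1245f(1) by simp
  have n_1245f_V3: "f_1245f V3 < 0" using f_1245f(2) by simp
  have z_1245f_V4: "f_1245f V4 = 0" using f_1245f(1) by simp
  have z_1245f_V5: "f_1245f V5 = 0" using f_1245f(1) by simp
  have n_1245f_A: "f_1245f A < 0" using f_1245f(2) by simp
  have n_1245f_E: "f_1245f E < 0" using f_1245f(2) by simp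
  obtain f_124af where f_124af: "\<forall>i. i \<in> {V1,V2,V4,A,F} \<longrightarrow> f_124af i = 0" "\<forall>i. i \<notin> {V1,V2,V4,A,F} \<longrightarrow> f_124af i < 0"
     "\<forall>l. sum l U = 0 \<longrightarrow> (\<Sum>i\<in>U. l i *\<^sub>R v i) = 0 \<longrightarrow> (\<Sum>i\<in>U. l i * f_124af i) = 0"
    using ff[OF mem_124af] by blast
  have n_124af_V0: "f_124af V0 < 0" using f_124af(2) by simp
  have z_124af_V1: "f_124af V1 = 0" using f_124af(1) by simp
  have z_124af_V2: "f_124af V2 = 0" using f_124af(1) by simp
  have n_124af_V3: "f_124af V3 < 0" using f_124af(2) by simp
  have z_124af_V4: "f_124af V4 = 0" using f_124af(1) by simp
  have n_124af_V5: "f_124af V5 < 0" using f_124af(2) by simp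
  have z_124af_A: "f_124af A = 0" using f_124af(1) by simp
  have n_124af_E: "f_124af E < 0" using f_124af(2) by simp
  obtain f_124be where f_124be: "\<forall>i. i \<in> {V1,V2,V4,B,E} \<longrightarrow> f_124be i = 0" "\<forall>i. i \<notin> {V1,V2,V4,B,E} \<longrightarrow> f_124be i < 0"
     "\<forall>l. sum l U = 0 \<longrightarrow> (\<Sum>i\<in>U. l i *\<^sub>R v i) = 0 \<longrightarrow> (\<Sum>i\<in>U. l i * f_124be i) = 0"
    using ff[OF mem_124be] by blast
  have n_124be_V0: "f_124be V0 < 0" using f_124be(2) by simp
  have z_124be_V1: "f_124be V1 = 0" using f_124be(1) by simp
  have z_124be_V2: "f_124be V2 = 0" using f_124be(1) by simp
  have n_124be_V3: "f_124be V3 < 0" using f_124be(2) by simp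
  have z_124be_V4: "f_124be V4 = 0" using f_124be(1) by simp
  have n_124be_V5: "f_124be V5 < 0" using f_124be(2) by simp
  have n_124be_A: "f_124be A < 0" using f_124be(2) by simp
  have z_124be_E: "f_124be E = 0" using f_124be(1) by simp
  obtain f_13abe where f_13abe: "\<forall>i. i \<in> {V1,V3,A,B,E} \<longrightarrow> f_13abe i = 0" "\<forall>i. i \<notin> {V1,V3,A,B,E} \<longrightarrow> f_13abe i < 0"
     "\<forall>l. sum l U = 0 \<longrightarrow> (\<Sum>i\<in>U. l i *\<^sub>R v i) = 0 \<longrightarrow> (\<Sum>i\<in>U. l i * f_13abe i) = 0"
    using ff[OF mem_13abe] by blast
  have n_13abe_V0: "f_13abe V0 < 0" using f_13abe(2) by simp
  have z_13abe_V1: "f_13abe V1 = 0" using f_13abe(1) by simp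
  have n_13abe_V2: "f_13abe V2 < 0" using f_13abe(2) by simp
  have z_13abe_V3: "f_13abe V3 = 0" using f_13abe(1) by simp
  have n_13abe_V4: "f_13abe V4 < 0" using f_13abe(2) by simp
  have n_13abe_V5: "f_13abe V5 < 0" using f_13abe(2) by simp
  have z_13abe_A: "f_13abe A = 0" using f_13abe(1) by simp
  have z_13abe_E: "f_13abe E = 0" using f_13abe(1) by simp
  obtain f_25abe where f_25abe: "\<forall>i. i \<in> {V2,V5,A,B,E} \<longrightarrow> f_25abe i = 0" "\<forall>i. i \<notin> {V2,V5,A,B,E} \<longrightarrow> f_25abe i < 0"
     "\<forall>l. sum l U = 0 \<longrightarrow> (\<Sum>i\<in>U. l i *\<^sub>R v i) = 0 \<longrightarrow> (\<Sum>i\<in>U. l i * f_25abe i) = 0"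
    using ff[OF mem_25abe] by blast
  have n_25abe_V0: "f_25abe V0 < 0" using f_25abe(2) by simp
  have n_25abe_V1: "f_25abe V1 < 0" using f_25abe(2) by simp
  have z_25abe_V2: "f_25abe V2 = 0" using f_25abe(1) by simp
  have n_25abe_V3: "f_25abe V3 < 0" using f_25abe(2) by simp
  have n_25abe_V4: "f_25abe V4 < 0" using f_25abe(2) by simp
  have z_25abe_V5: "f_25abe V5 = 0" using f_25abe(1) by simp
  have z_25abe_A: "f_25abe A = 0" using f_25abe(1) by simp
  have z_25abe_E: "f_25abe E = 0" using f_25abe(1) by simp
  obtain f_26bce where f_26bce: "\<forall>i. i \<in> {V2,V6,B,C,E} \<longrightarrow> f_26bce i = 0" "\<forall>i. i \<notin> {V2,V6,B,C,E} \<longrightarrow> f_26bce i < 0"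
     "\<forall>l. sum l U = 0 \<longrightarrow> (\<Sum>i\<in>U. l i *\<^sub>R v i) = 0 \<longrightarrow> (\<Sum>i\<in>U. l i * f_26bce i) = 0"
    using ff[OF mem_26bce] by blast
  have n_26bce_V0: "f_26bce V0 < 0" using f_26bce(2) by simp
  have n_26bce_V1: "f_26bce V1 < 0" using f_26bce(2) by simp
  have z_26bce_V2: "f_26bce V2 = 0" using f_26bce(1) by simp
  have n_26bce_V3: "f_26bce V3 < 0" using f_26bce(2) by simp
  have n_26bce_V4: "f_26bce V4 < 0" using f_26bce(2) by simp
  have n_26bce_V5: "f_26bce V5 < 0" using f_26bce(2) by simp
  have n_26bce_A: "f_26bce A < 0" using f_26bce(2) by simp
  have z_26bce_E: "f_26bce E = 0" using f_26bce(1) by simp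
  obtain f_Q1 where f_Q1: "\<forall>i. i \<in> {V0,V1,V2,V3,V4,V5,V6} \<longrightarrow> f_Q1 i = 0" "\<forall>i. i \<notin> {V0,V1,V2,V3,V4,V5,V6} \<longrightarrow> f_Q1 i < 0"
     "\<forall>l. sum l U = 0 \<longrightarrow> (\<Sum>i\<in>U. l i *\<^sub>R v i) = 0 \<longrightarrow> (\<Sum>i\<in>U. l i * f_Q1 i) = 0"
    using ff[OF mem_Q1] by blast
  have z_Q1_V0: "f_Q1 V0 = 0" using f_Q1(1) by simp
  have z_Q1_V1: "f_Q1 V1 = 0" using f_Q1(1) by simp
  have z_Q1_V2: "f_Q1 V2 = 0" using f_Q1(1) by simp
  have z_Q1_V3: "f_Q1 V3 = 0" using f_Q1(1) by simp
  have z_Q1_V4: "f_Q1 V4 = 0" using f_Q1(1) by simp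
  have z_Q1_V5: "f_Q1 V5 = 0" using f_Q1(1) by simp
  have n_Q1_A: "f_Q1 A < 0" using f_Q1(2) by simp
  have n_Q1_E: "f_Q1 E < 0" using f_Q1(2) by simp
  obtain f_Q2 where f_Q2: "\<forall>i. i \<in> {A,B,C,D,E,F,G} \<longrightarrow> f_Q2 i = 0" "\<forall>i. i \<notin> {A,B,C,D,E,F,G} \<longrightarrow> f_Q2 i < 0"
     "\<forall>l. sum l U = 0 \<longrightarrow> (\<Sum>i\<in>U. l i *\<^sub>R v i) = 0 \<longrightarrow> (\<Sum>i\<in>U. l i * f_Q2 i) = 0"
    using ff[OF mem_Q2] by blast
  have n_Q2_V0: "f_Q2 V0 < 0" using f_Q2(2) by simp
  have n_Q2_V1: "f_Q2 V1 < 0" using f_Q2(2) by simp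
  have n_Q2_V2: "f_Q2 V2 < 0" using f_Q2(2) by simp
  have n_Q2_V3: "f_Q2 V3 < 0" using f_Q2(2) by simp
  have n_Q2_V4: "f_Q2 V4 < 0" using f_Q2(2) by simp
  have n_Q2_V5: "f_Q2 V5 < 0" using f_Q2(2) by simp
  have z_Q2_A: "f_Q2 A = 0" using f_Q2(1) by simp
  have z_Q2_E: "f_Q2 E = 0" using f_Q2(1) by simp
  have sub_al: "{V0,V1,V2,V3,V4,V5,A} \<subseteq> U" "card {V0,V1,V2,V3,V4,V5,A} = 7" by (simp_all add: U_def)
  obtain al where al: "\<forall>i. i \<notin> {V0,V1,V2,V3,V4,V5,A} \<longrightarrow> al i = 0" "sum al U = 0" "(\<Sum>i\<in>U. al i *\<^sub>R v i) = 0" "\<exists>i\<in>{V0,V1,V2,V3,V4,V5,A}. al i \<noteq> 0"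
    using dep[OF inj sub_al(1) fU sub_al(2)] by blast
  have al_E: "al E = 0" using al(1) by simp
  have nz_al: "al V0 \<noteq> 0 \<or> al V1 \<noteq> 0 \<or> al V2 \<noteq> 0 \<or> al V3 \<noteq> 0 \<or> al V4 \<noteq> 0 \<or> al V5 \<noteq> 0 \<or> al A \<noteq> 0" using al(4) by auto
  note Z_al = nz_al al_E
  have "(\<Sum>i\<in>U. al i * f_0126d i) = 0" using f_0126d(3) al(2,3) by blast
  then have e_al_0126d: "al V3 * f_0126d V3 + al V4 * f_0126d V4 + al V5 * f_0126d V5 + al A * f_0126d A + al E * f_0126d E = 0" by (simp add: U_def z_0126d_V0 z_0126d_V1 z_0126d_V2; linarith)
  note s_al_0126d = sgn5[OF e_al_0126d n_0126d_V3 n_0126d_V4 n_0126d_V5 n_0126d_A n_0126d_E]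
  have "(\<Sum>i\<in>U. al i * f_1234e i) = 0" using f_1234e(3) al(2,3) by blast
  then have e_al_1234e: "al V0 * f_1234e V0 + al V5 * f_1234e V5 + al A * f_1234e A = 0" by (simp add: U_def z_1234e_V1 z_1234e_V2 z_1234e_V3 z_1234e_V4 z_1234e_E; linarith)
  note s_al_1234e = sgn3[OF e_al_1234e n_1234e_V0 n_1234e_V5 n_1234e_A]
  have "(\<Sum>i\<in>U. al i * f_1245f i) = 0" using f_1245f(3) al(2,3) by blast
  then have e_al_1245f: "al V0 * f_1245f V0 + al V3 * f_1245f V3 + al A * f_1245f A + al E * f_1245f E = 0" by (simp add: U_def z_1245f_V1 z_1245f_V2 z_1245f_V4 z_1245f_V5; linarith)
  note s_al_1245f = sgn4[OF e_al_1245f n_1245f_V0 n_1245f_V3 n_1245f_A n_1245f_E]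
  have "(\<Sum>i\<in>U. al i * f_26bce i) = 0" using f_26bce(3) al(2,3) by blast
  then have e_al_26bce: "al V0 * f_26bce V0 + al V1 * f_26bce V1 + al V3 * f_26bce V3 + al V4 * f_26bce V4 + al V5 * f_26bce V5 + al A * f_26bce A = 0" by (simp add: U_def z_26bce_V2 z_26bce_E; linarith)
  note s_al_26bce = sgn6[OF e_al_26bce n_26bce_V0 n_26bce_V1 n_26bce_V3 n_26bce_V4 n_26bce_V5 n_26bce_A]
  have "(\<Sum>i\<in>U. al i * f_Q1 i) = 0" using f_Q1(3) al(2,3) by blast
  then have e_al_Q1: "al A * f_Q1 A + al E * f_Q1 E = 0" by (simp add: U_def z_Q1_V0 z_Q1_V1 z_Q1_V2 z_Q1_V3 z_Q1_V4 z_Q1_V5; linarith)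
  note s_al_Q1 = sgn2[OF e_al_Q1 n_Q1_A n_Q1_E]
  have "(\<Sum>i\<in>U. al i * f_Q2 i) = 0" using f_Q2(3) al(2,3) by blast
  then have e_al_Q2: "al V0 * f_Q2 V0 + al V1 * f_Q2 V1 + al V2 * f_Q2 V2 + al V3 * f_Q2 V3 + al V4 * f_Q2 V4 + al V5 * f_Q2 V5 = 0" by (simp add: U_def z_Q2_A z_Q2_E; linarith)
  note s_al_Q2 = sgn6[OF e_al_Q2 n_Q2_V0 n_Q2_V1 n_Q2_V2 n_Q2_V3 n_Q2_V4 n_Q2_V5]
  note S_al = s_al_0126d s_al_1234e s_al_1245f s_al_26bce s_al_Q1 s_al_Q2
  have G_al: "(al V4 > 0 \<and> al V5 < 0 \<and> al V3 < 0) \<or> (al V4 < 0 \<and> al V5 > 0 \<and> al V3 > 0)" using S_al Z_al by smt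
  have sub_be: "{V0,V1,V2,V3,V4,A,E} \<subseteq> U" "card {V0,V1,V2,V3,V4,A,E} = 7" by (simp_all add: U_def)
  obtain be where be: "\<forall>i. i \<notin> {V0,V1,V2,V3,V4,A,E} \<longrightarrow> be i = 0" "sum be U = 0" "(\<Sum>i\<in>U. be i *\<^sub>R v i) = 0" "\<exists>i\<in>{V0,V1,V2,V3,V4,A,E}. be i \<noteq> 0"
    using dep[OF inj sub_be(1) fU sub_be(2)] by blast
  have be_V5: "be V5 = 0" using be(1) by simp
  have nz_be: "be V0 \<noteq> 0 \<or> be V1 \<noteq> 0 \<or> be V2 \<noteq> 0 \<or> be V3 \<noteq> 0 \<or> be V4 \<noteq> 0 \<or> be A \<noteq> 0 \<or> be E \<noteq> 0" using be(4) by auto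
  note Z_be = nz_be be_V5
  have "(\<Sum>i\<in>U. be i * f_014ae i) = 0" using f_014ae(3) be(2,3) by blast
  then have e_be_014ae: "be V2 * f_014ae V2 + be V3 * f_014ae V3 + be V5 * f_014ae V5 = 0" by (simp add: U_def z_014ae_V0 z_014ae_V1 z_014ae_V4 z_014ae_A z_014ae_E; linarith)
  note s_be_014ae = sgn3[OF e_be_014ae n_014ae_V2 n_014ae_V3 n_014ae_V5]
  have "(\<Sum>i\<in>U. be i * f_124af i) = 0" using f_124af(3) be(2,3) by blast
  then have e_be_124af: "be V0 * f_124af V0 + be V3 * f_124af V3 + be V5 * f_124af V5 + be E * f_124af E = 0" by (simp add: U_def z_124af_V1 z_124af_V2 z_124af_V4 z_124af_A; linarith)
  note s_be_124af = sgn4[OF e_be_124af n_124af_V0 n_124af_V3 n_124af_V5 n_124af_E]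
  have "(\<Sum>i\<in>U. be i * f_124be i) = 0" using f_124be(3) be(2,3) by blast
  then have e_be_124be: "be V0 * f_124be V0 + be V3 * f_124be V3 + be V5 * f_124be V5 + be A * f_124be A = 0" by (simp add: U_def z_124be_V1 z_124be_V2 z_124be_V4 z_124be_E; linarith)
  note s_be_124be = sgn4[OF e_be_124be n_124be_V0 n_124be_V3 n_124be_V5 n_124be_A]
  have "(\<Sum>i\<in>U. be i * f_13abe i) = 0" using f_13abe(3) be(2,3) by blast
  then have e_be_13abe: "be V0 * f_13abe V0 + be V2 * f_13abe V2 + be V4 * f_13abe V4 + be V5 * f_13abe V5 = 0" by (simp add: U_def z_13abe_V1 z_13abe_V3 z_13abe_A z_13abe_E; linarith)
  note s_be_13abe = sgn4[OF e_be_13abe n_13abe_V0 n_13abe_V2 n_13abe_V4 n_13abe_V5]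
  have "(\<Sum>i\<in>U. be i * f_Q1 i) = 0" using f_Q1(3) be(2,3) by blast
  then have e_be_Q1: "be A * f_Q1 A + be E * f_Q1 E = 0" by (simp add: U_def z_Q1_V0 z_Q1_V1 z_Q1_V2 z_Q1_V3 z_Q1_V4 z_Q1_V5; linarith)
  note s_be_Q1 = sgn2[OF e_be_Q1 n_Q1_A n_Q1_E]
  have "(\<Sum>i\<in>U. be i * f_Q2 i) = 0" using f_Q2(3) be(2,3) by blast
  then have e_be_Q2: "be V0 * f_Q2 V0 + be V1 * f_Q2 V1 + be V2 * f_Q2 V2 + be V3 * f_Q2 V3 + be V4 * f_Q2 V4 + be V5 * f_Q2 V5 = 0" by (simp add: U_def z_Q2_A z_Q2_E; linarith)
  note s_be_Q2 = sgn6[OF e_be_Q2 n_Q2_V0 n_Q2_V1 n_Q2_V2 n_Q2_V3 n_Q2_V4 n_Q2_V5]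
  note S_be = s_be_014ae s_be_124af s_be_124be s_be_13abe s_be_Q1 s_be_Q2
  have G_be: "(be V3 > 0 \<and> be V4 > 0) \<or> (be V3 < 0 \<and> be V4 < 0)" using S_be Z_be by smt
  define de where "de i = be V3 * al i - al V3 * be i" for i
  have de2: "sum de U = 0" using al(2) be(2)
    by (simp add: de_def sum_subtractf sum_distrib_left[symmetric])
  have de3: "(\<Sum>i\<in>U. de i *\<^sub>R v i) = 0" using al(3) be(3)
    by (simp add: de_def scaleR_diff_left sum_subtractf scaleR_sum_right[symmetric] flip: scaleR_scaleR)
  have de_V3: "de V3 = 0" by (simp add: de_def)
  note de = de2 de2 de3 de_V3
  note Z_de = de_V3

  have "(\<Sum>i\<in>U. de i * f_024ae i) = 0" using f_024ae(3) de(2,3) by blast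
  then have e_de_024ae: "de V1 * f_024ae V1 + de V3 * f_024ae V3 + de V5 * f_024ae V5 = 0" by (simp add: U_def z_024ae_V0 z_024ae_V2 z_024ae_V4 z_024ae_A z_024ae_E; linarith)
  note s_de_024ae = sgn3[OF e_de_024ae n_024ae_V1 n_024ae_V3 n_024ae_V5]
  have "(\<Sum>i\<in>U. de i * f_124af i) = 0" using f_124af(3) de(2,3) by blast
  then have e_de_124af: "de V0 * f_124af V0 + de V3 * f_124af V3 + de V5 * f_124af V5 + de E * f_124af E = 0" by (simp add: U_def z_124af_V1 z_124af_V2 z_124af_V4 z_124af_A; linarith)
  note s_de_124af = sgn4[OF e_de_124af n_124af_V0 n_124af_V3 n_124af_V5 n_124af_E]
  have "(\<Sum>i\<in>U. de i * f_124be i) = 0" using f_124be(3) de(2,3) by blast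
  then have e_de_124be: "de V0 * f_124be V0 + de V3 * f_124be V3 + de V5 * f_124be V5 + de A * f_124be A = 0" by (simp add: U_def z_124be_V1 z_124be_V2 z_124be_V4 z_124be_E; linarith)
  note s_de_124be = sgn4[OF e_de_124be n_124be_V0 n_124be_V3 n_124be_V5 n_124be_A]
  have "(\<Sum>i\<in>U. de i * f_25abe i) = 0" using f_25abe(3) de(2,3) by blast
  then have e_de_25abe: "de V0 * f_25abe V0 + de V1 * f_25abe V1 + de V3 * f_25abe V3 + de V4 * f_25abe V4 = 0" by (simp add: U_def z_25abe_V2 z_25abe_V5 z_25abe_A z_25abe_E; linarith)
  note s_de_25abe = sgn4[OF e_de_25abe n_25abe_V0 n_25abe_V1 n_25abe_V3 n_25abe_V4]
  have "(\<Sum>i\<in>U. de i * f_Q1 i) = 0" using f_Q1(3) de(2,3) by blast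
  then have e_de_Q1: "de A * f_Q1 A + de E * f_Q1 E = 0" by (simp add: U_def z_Q1_V0 z_Q1_V1 z_Q1_V2 z_Q1_V3 z_Q1_V4 z_Q1_V5; linarith)
  note s_de_Q1 = sgn2[OF e_de_Q1 n_Q1_A n_Q1_E]
  note S_de = s_de_024ae s_de_124af s_de_124be s_de_25abe s_de_Q1
  have G_de: "(de V4 \<ge> 0 \<and> de V5 \<ge> 0) \<or> (de V4 \<le> 0 \<and> de V5 \<le> 0)" using S_de Z_de by smt
  have d4: "de V4 = be V3 * al V4 - al V3 * be V4" by (simp add: de_def)
  have d5: "de V5 = be V3 * al V5" by (simp add: de_def be_V5)
  from G_al G_be show False
  proof (elim disjE conjE)
    assume h: "0 < al V4" "al V5 < 0" "al V3 < 0" "0 < be V3" "0 < be V4"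
    have "be V3 * al V4 > 0" "al V3 * be V4 < 0" "be V3 * al V5 < 0"
      using h by (simp_all add: mult_neg_pos mult_pos_neg)
    then show False using G_de d4 d5 by linarith
  next
    assume h: "0 < al V4" "al V5 < 0" "al V3 < 0" "be V3 < 0" "be V4 < 0"
    have "be V3 * al V4 < 0" "al V3 * be V4 > 0" "be V3 * al V5 > 0"
      using h by (simp_all add: mult_neg_pos mult_pos_neg mult_neg_neg)
    then show False using G_de d4 d5 by linarith
  next
    assume h: "al V4 < 0" "0 < al V5" "0 < al V3" "0 < be V3" "0 < be V4"
    have "be V3 * al V4 < 0" "al V3 * be V4 > 0" "be V3 * al V5 > 0"
      using h by (simp_all add: mult_neg_pos mult_pos_neg)
    then show False using G_de d4 d5 by linarith
  next
    assume h: "al V4 < 0" "0 < al V5" "0 < al V3" "be V3 < 0" "be V4 < 0"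
    have "be V3 * al V4 > 0" "al V3 * be V4 < 0" "be V3 * al V5 < 0"
      using h by (simp_all add: mult_neg_pos mult_pos_neg mult_neg_neg)
    then show False using G_de d4 d5 by linarith
  qed
qed

end
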